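(* Read's space $\mathcal R=(c_0,|||\cdot|||)$ is weakly locally uniformly rotund: for every $x$ with $|||x|||=1$ and every sequence $(x_n)$ with $|||x_n|||=1$ and $|||x+x_n|||\to 2$, the sequence $(x_n)$ converges weakly to $x$.
   Context: Let $c_{00}(\mathbb Q)$ be the set of finitely supported sequences with rational coefficients, and let $(u_n)_{n\in\mathbb N}$ be a sequence in $c_{00}(\mathbb Q)$ which lists every element of $c_{00}(\mathbb Q)$ infinitely many times. Let $(a_n)_{n\in\mathbb N}$ be a strictly increasing sequence of positive integers with $a_n>\max\operatorname{supp} u_n$ and $a_n>\|u_n\|_1$ for every $n$. $(e_n)$ denotes the canonical unit vectors and $\langle x,y\rangle=\sum_n x_ny_n$. Read's norm on $c_0$ is $|||x||| = \|x\|_\infty + \sum_{n} 2^{-a_n^2}|\langle x, u_n - e_{a_n}\rangle|$, and Read's space is $\mathcal R=(c_0,|||\cdot|||)$ (real scalars). *)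

theory Defs
  imports "HOL-Analysis.Analysis"
begin

definition c0 :: "(nat \<Rightarrow> real) set" where
  "c0 = {x. x \<longlonglongrightarrow> 0}"

definition c00Q :: "(nat \<Rightarrow> rat) set" where
  "c00Q = {v. finite {k. v k \<noteq> 0}}"

definition l1norm_rat :: "(nat \<Rightarrow> rat) \<Rightarrow> real" where
  "l1norm_rat v = (\<Sum>k\<in>{k. v k \<noteq> 0}. \<bar>real_of_rat (v k)\<bar>)"

text \<open>Standing assumptions on the parameters (u_n) and (a_n) of Read's norm.
  The condition a_n > max supp u_n is written as: every k in the support of u_n
  is below a_n.\<close>
definition read_params :: "(nat \<Rightarrow> nat \<Rightarrow> rat) \<Rightarrow> (nat \<Rightarrow> nat) \<Rightarrow> bool" where
  "read_params u a \<longleftrightarrow>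
     (\<forall>n. u n \<in> c00Q) \<and>
     (\<forall>v\<in>c00Q. infinite {n. u n = v}) \<and>
     strict_mono a \<and> (\<forall>n. 0 < a n) \<and>
     (\<forall>n k. u n k \<noteq> 0 \<longrightarrow> k < a n) \<and>
     (\<forall>n. l1norm_rat (u n) < real (a n))"

text \<open>The pairing <x, u_n - e_(a_n)>; the summand vanishes for k > a_n.\<close>
definition read_pair :: "(nat \<Rightarrow> nat \<Rightarrow> rat) \<Rightarrow> (nat \<Rightarrow> nat) \<Rightarrow> nat \<Rightarrow> (nat \<Rightarrow> real) \<Rightarrow> real" where
  "read_pair u a n x =
     (\<Sum>k\<le>a n. x k * (real_of_rat (u n k) - (if k = a n then 1 else 0)))"

definition sup_norm :: "(nat \<Rightarrow> real) \<Rightarrow> real" where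
  "sup_norm x = (SUP k. \<bar>x k\<bar>)"

definition read_norm :: "(nat \<Rightarrow> nat \<Rightarrow> rat) \<Rightarrow> (nat \<Rightarrow> nat) \<Rightarrow> (nat \<Rightarrow> real) \<Rightarrow> real" where
  "read_norm u a x = sup_norm x +
     (\<Sum>n. (1/2) ^ ((a n)\<^sup>2) * \<bar>read_pair u a n x\<bar>)"

definition read_dual :: "(nat \<Rightarrow> nat \<Rightarrow> rat) \<Rightarrow> (nat \<Rightarrow> nat) \<Rightarrow> ((nat \<Rightarrow> real) \<Rightarrow> real) set" where
  "read_dual u a = {f.
     (\<forall>y\<in>c0. \<forall>z\<in>c0. f (\<lambda>k. y k + z k) = f y + f z) \<and>
     (\<forall>c. \<forall>y\<in>c0. f (\<lambda>k. c * y k) = c * f y) \<and>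
     (\<exists>C. \<forall>y\<in>c0. \<bar>f y\<bar> \<le> C * read_norm u a y)}"

definition read_weakly_conv :: "(nat \<Rightarrow> nat \<Rightarrow> rat) \<Rightarrow> (nat \<Rightarrow> nat) \<Rightarrow> (nat \<Rightarrow> nat \<Rightarrow> real) \<Rightarrow> (nat \<Rightarrow> real) \<Rightarrow> bool" where
  "read_weakly_conv u a xs x \<longleftrightarrow>
     (\<forall>f\<in>read_dual u a. (\<lambda>n. f (xs n)) \<longlonglongrightarrow> f x)"

end

theory Submission
  imports Defs
begin

definition Pn :: "(nat \<Rightarrow> nat \<Rightarrow> rat) \<Rightarrow> (nat \<Rightarrow> nat) \<Rightarrow> (nat \<Rightarrow> real) \<Rightarrow> real" where
  "Pn u a w = (\<Sum>m. (1/2) ^ ((a m)\<^sup>2) * \<bar>read_pair u a m w\<bar>)"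

lemma read_norm_Pn: "read_norm u a w = sup_norm w + Pn u a w"
  by (simp add: read_norm_def Pn_def)

definition ip :: "(nat \<Rightarrow> real) \<Rightarrow> (nat \<Rightarrow> rat) \<Rightarrow> real" where
  "ip w v = (\<Sum>k\<in>{k. v k \<noteq> 0}. w k * real_of_rat (v k))"

lemma params_supp:
  assumes "read_params u a"
  shows "finite {k. u m k \<noteq> 0}" "{k. u m k \<noteq> 0} \<subseteq> {..<a m}"
  using assms by (auto simp: read_params_def c00Q_def)

lemma coef_bound:
  assumes "read_params u a"
  shows "(\<Sum>k\<le>a m. \<bar>real_of_rat (u m k) - (if k = a m then 1 else 0)\<bar>) \<le> real (a m) + 1"
proof -
  have "(\<Sum>k\<le>a m. \<bar>real_of_rat (u m k) - (if k = a m then 1 else 0)\<bar>)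
      \<le> (\<Sum>k\<le>a m. \<bar>real_of_rat (u m k)\<bar> + (if k = a m then 1 else 0))"
    by (rule sum_mono) (auto simp del: abs_of_rat)
  also have "\<dots> = (\<Sum>k\<le>a m. \<bar>real_of_rat (u m k)\<bar>) + 1"
    by (simp add: sum.distrib)
  also have "(\<Sum>k\<le>a m. \<bar>real_of_rat (u m k)\<bar>) = (\<Sum>k\<in>{k. u m k \<noteq> 0}. \<bar>real_of_rat (u m k)\<bar>)"
    using params_supp[OF assms, of m] by (intro sum.mono_neutral_right) auto
  also have "\<dots> = l1norm_rat (u m)" by (simp add: l1norm_rat_def)
  also have "\<dots> < real (a m)" using assms by (simp add: read_params_def)
  finally show ?thesis by simp
qed

lemma pair_bound:
  assumes "read_params u a" and "\<forall>k. \<bar>w k\<bar> \<le> S"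
  shows "\<bar>read_pair u a m w\<bar> \<le> (real (a m) + 1) * S"
proof -
  have "\<bar>read_pair u a m w\<bar> \<le> (\<Sum>k\<le>a m. \<bar>w k * (real_of_rat (u m k) - (if k = a m then 1 else 0))\<bar>)"
    unfolding read_pair_def by (rule sum_abs)
  also have "\<dots> \<le> (\<Sum>k\<le>a m. S * \<bar>real_of_rat (u m k) - (if k = a m then 1 else 0)\<bar>)"
    by (intro sum_mono) (simp add: abs_mult assms(2) mult_right_mono)
  also have "\<dots> = S * (\<Sum>k\<le>a m. \<bar>real_of_rat (u m k) - (if k = a m then 1 else 0)\<bar>)"
    by (simp add: sum_distrib_left)
  also have "\<dots> \<le> S * (real (a m) + 1)"
    using coef_bound[OF assms(1)] assms(2)[rule_format, of 0]
    by (intro mult_left_mono) auto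
  finally show ?thesis by (simp add: mult.commute)
qed

lemma pair_ip:
  assumes "read_params u a"
  shows "read_pair u a m w = ip w (u m) - w (a m)"
proof -
  have "read_pair u a m w = (\<Sum>k\<le>a m. w k * real_of_rat (u m k)) - (\<Sum>k\<le>a m. w k * (if k = a m then 1 else 0))"
    unfolding read_pair_def by (simp add: right_diff_distrib sum_subtractf)
  also have "(\<Sum>k\<le>a m. w k * (if k = a m then 1 else 0)) = w (a m)"
  proof -
    have *: "(\<lambda>k. w k * (if k = a m then 1 else 0)) = (\<lambda>k. if k = a m then w k else 0)" by auto
    show ?thesis unfolding * by (simp add: sum.delta)
  qed
  also have "(\<Sum>k\<le>a m. w k * real_of_rat (u m k)) = ip w (u m)"
    unfolding ip_def using params_supp[OF assms, of m] by (intro sum.mono_neutral_right) auto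
  finally show ?thesis .
qed

lemma pair_add: "read_pair u a m (\<lambda>k. x k + y k) = read_pair u a m x + read_pair u a m y"
  by (simp add: read_pair_def distrib_right sum.distrib)

lemma pair_scale: "read_pair u a m (\<lambda>k. c * x k) = c * read_pair u a m x"
  by (simp add: read_pair_def sum_distrib_left mult.assoc)

lemma pair_tendsto:
  assumes "\<And>k. (\<lambda>n. z n k) \<longlonglongrightarrow> y k"
  shows "(\<lambda>n. read_pair u a m (z n)) \<longlonglongrightarrow> read_pair u a m y"
  unfolding read_pair_def by (intro tendsto_intros assms)

lemma weight_nat: "(t + 1) * 2 ^ t \<le> 2 * 2 ^ (t*t::nat)"
proof -
  have "t + 1 \<le> 2 ^ t" by (induction t) auto
  then have "(t + 1) * 2 ^ t \<le> 2 ^ t * 2 ^ t" by (rule mult_le_mono1)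
  also have "\<dots> = 2 ^ (t + t)" by (simp add: power_add)
  also have "\<dots> \<le> 2 ^ (t*t + 1)"
  proof (intro power_increasing)
    show "t + t \<le> t * t + 1"
    proof (cases "t \<le> 1")
      case True then show ?thesis by (cases t) auto
    next
      case False then have "2 \<le> t" by simp
      then have "2 * t \<le> t * t" by (rule mult_le_mono1)
      then show ?thesis by linarith
    qed
  qed auto
  finally show ?thesis by simp
qed

lemma weight: "(real t + 1) * (1/2) ^ (t\<^sup>2) \<le> 2 * (1/2) ^ t"
proof -
  have "real ((t + 1) * 2 ^ t) \<le> real (2 * 2 ^ (t*t))"
    using weight_nat[of t] by linarith
  then have "(real t + 1) * 2 ^ t \<le> 2 * 2 ^ (t*t)" by (simp add: ring_distribs)
  then show ?thesis
    by (simp add: power2_eq_square power_one_over field_simps)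
qed

lemma weight_a:
  assumes "read_params u a"
  shows "(real (a m) + 1) * (1/2) ^ ((a m)\<^sup>2) \<le> 2 * (1/2) ^ m"
proof -
  have "m \<le> a m" using assms by (simp add: read_params_def seq_suble)
  then have "(1/2::real) ^ a m \<le> (1/2) ^ m" by (simp add: power_decreasing)
  then show ?thesis using weight[of "a m"] by linarith
qed

lemma summable_M:
  assumes "read_params u a"
  shows "summable (\<lambda>m. (1/2::real) ^ ((a m)\<^sup>2) * (real (a m) + 1))"
proof (rule summable_comparison_test)
  show "\<exists>N. \<forall>n\<ge>N. norm ((1/2::real) ^ ((a n)\<^sup>2) * (real (a n) + 1)) \<le> 2 * (1/2) ^ n"
    using weight_a[OF assms] by (auto simp: mult.commute)
  show "summable (\<lambda>n. 2 * (1/2::real) ^ n)" by (intro summable_mult summable_geometric) auto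
qed

lemma c0_bnd:
  assumes "w \<in> c0" shows "\<exists>S. \<forall>k. \<bar>w k\<bar> \<le> S"
proof -
  have "Bseq w" using assms unfolding c0_def by (auto intro: convergent_imp_Bseq convergentI)
  then show ?thesis unfolding Bseq_def by (auto simp: real_norm_def)
qed

lemma sup_ge:
  assumes "\<forall>k. \<bar>w k\<bar> \<le> S" shows "\<bar>w k\<bar> \<le> sup_norm w"
  unfolding sup_norm_def using assms by (intro cSUP_upper bdd_aboveI2) auto

lemma sup_le:
  assumes "\<forall>k. \<bar>w k\<bar> \<le> S" shows "sup_norm w \<le> S"
  unfolding sup_norm_def using assms by (intro cSUP_least) auto

lemma sup_nonneg:
  assumes "\<forall>k. \<bar>w k\<bar> \<le> S" shows "0 \<le> sup_norm w"
  using sup_ge[OF assms, of 0] by linarith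

lemma sup_add:
  assumes "\<forall>k. \<bar>w k\<bar> \<le> S" "\<forall>k. \<bar>y k\<bar> \<le> T"
  shows "sup_norm (\<lambda>k. w k + y k) \<le> sup_norm w + sup_norm y"
proof (rule sup_le, rule allI)
  fix k show "\<bar>w k + y k\<bar> \<le> sup_norm w + sup_norm y"
    using sup_ge[OF assms(1), of k] sup_ge[OF assms(2), of k] by linarith
qed

lemma Pn_term_bound:
  assumes "read_params u a" "\<forall>k. \<bar>w k\<bar> \<le> S"
  shows "(1/2::real) ^ ((a m)\<^sup>2) * \<bar>read_pair u a m w\<bar> \<le> (1/2::real) ^ ((a m)\<^sup>2) * (real (a m) + 1) * S"
  using pair_bound[OF assms, of m] by (simp add: mult.assoc mult_left_mono)

lemma Pn_summable:
  assumes "read_params u a" "\<forall>k. \<bar>w k\<bar> \<le> S"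
  shows "summable (\<lambda>m. (1/2::real) ^ ((a m)\<^sup>2) * \<bar>read_pair u a m w\<bar>)"
proof (rule summable_comparison_test)
  show "\<exists>N. \<forall>n\<ge>N. norm ((1/2::real) ^ ((a n)\<^sup>2) * \<bar>read_pair u a n w\<bar>) \<le> (1/2::real) ^ ((a n)\<^sup>2) * (real (a n) + 1) * S"
    using Pn_term_bound[OF assms] by auto
  show "summable (\<lambda>n. (1/2::real) ^ ((a n)\<^sup>2) * (real (a n) + 1) * S)"
    by (intro summable_mult2 summable_M[OF assms(1)] assms)
qed

lemma Pn_nonneg:
  assumes "read_params u a" "\<forall>k. \<bar>w k\<bar> \<le> S"
  shows "0 \<le> Pn u a w"
  unfolding Pn_def by (intro suminf_nonneg Pn_summable[OF assms]) auto

lemma Pn_le: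
  assumes "read_params u a" "\<forall>k. \<bar>w k\<bar> \<le> S"
  shows "Pn u a w \<le> 4 * S"
proof -
  have S: "0 \<le> S" using assms(2) by (metis abs_ge_zero order_trans)
  have "Pn u a w \<le> (\<Sum>m. (2 * S) * (1/2::real) ^ m)"
    unfolding Pn_def
  proof (rule suminf_le)
    fix m
    have "(1/2::real) ^ ((a m)\<^sup>2) * \<bar>read_pair u a m w\<bar> \<le> ((real (a m) + 1) * (1/2::real) ^ ((a m)\<^sup>2)) * S"
      using Pn_term_bound[OF assms, of m] by (simp add: mult_ac)
    also have "\<dots> \<le> (2 * (1/2) ^ m) * S"
      by (intro mult_right_mono weight_a[OF assms(1)] S)
    finally show "(1/2::real) ^ ((a m)\<^sup>2) * \<bar>read_pair u a m w\<bar> \<le> (2 * S) * (1/2::real) ^ m"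
      by (simp add: mult_ac)
  qed (auto intro: Pn_summable[OF assms] summable_mult summable_geometric)
  also have "\<dots> = 4 * S"
    by (subst suminf_mult) (auto simp: suminf_geometric)
  finally show ?thesis .
qed

lemma read_norm_le:
  assumes "read_params u a" "\<forall>k. \<bar>w k\<bar> \<le> S"
  shows "read_norm u a w \<le> 5 * S"
  using Pn_le[OF assms] sup_le[OF assms(2)] by (simp add: read_norm_Pn)

lemma Pn_add:
  assumes "read_params u a" "\<forall>k. \<bar>w k\<bar> \<le> S" "\<forall>k. \<bar>y k\<bar> \<le> T"
  shows "Pn u a (\<lambda>k. w k + y k) \<le> Pn u a w + Pn u a y"
proof -
  have b: "\<forall>k. \<bar>w k + y k\<bar> \<le> S + T" using assms(2,3) by (metis abs_triangle_ineq add_mono order_trans)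
  have s1: "summable (\<lambda>m. (1/2::real) ^ ((a m)\<^sup>2) * \<bar>read_pair u a m w + read_pair u a m y\<bar>)"
    using Pn_summable[OF assms(1) b] by (simp add: pair_add)
  have s2: "summable (\<lambda>m. (1/2::real) ^ ((a m)\<^sup>2) * \<bar>read_pair u a m w\<bar> + (1/2::real) ^ ((a m)\<^sup>2) * \<bar>read_pair u a m y\<bar>)"
    by (intro summable_add Pn_summable[OF assms(1,2)] Pn_summable[OF assms(1,3)])
  have s3: "summable (\<lambda>m. (1/2::real) ^ ((a m)\<^sup>2) * (\<bar>read_pair u a m w\<bar> + \<bar>read_pair u a m y\<bar>))"
    using s2 by (simp add: ring_distribs)
  show ?thesis
    unfolding Pn_def
    apply (subst suminf_add[OF Pn_summable[OF assms(1,2)] Pn_summable[OF assms(1,3)]])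
    apply (rule suminf_le)
      apply (auto simp: pair_add ring_distribs[symmetric] intro!: mult_left_mono s1 s3)
    done
qed

lemma Pn_scale:
  assumes "read_params u a" "\<forall>k. \<bar>w k\<bar> \<le> S"
  shows "Pn u a (\<lambda>k. c * w k) = \<bar>c\<bar> * Pn u a w"
  unfolding Pn_def pair_scale
  by (subst suminf_mult[OF Pn_summable[OF assms], symmetric]) (simp add: abs_mult mult_ac)

lemma Pn_tendsto:
  assumes "read_params u a" "\<forall>n k. \<bar>z n k\<bar> \<le> B" "\<And>k. (\<lambda>n. z n k) \<longlonglongrightarrow> y k"
  shows "(\<lambda>n. Pn u a (z n)) \<longlonglongrightarrow> Pn u a y"
proof -
  have "((\<lambda>n. \<Sum>m. (1/2::real) ^ ((a m)\<^sup>2) * \<bar>read_pair u a m (z n)\<bar>) \<longlongrightarrow>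
      (\<Sum>m. (1/2::real) ^ ((a m)\<^sup>2) * \<bar>read_pair u a m y\<bar>)) sequentially"
  proof (rule tannerys_theorem[THEN conjunct2, THEN conjunct2])
    show "((\<lambda>n. (1/2::real) ^ ((a m)\<^sup>2) * \<bar>read_pair u a m (z n)\<bar>) \<longlongrightarrow>
      (1/2::real) ^ ((a m)\<^sup>2) * \<bar>read_pair u a m y\<bar>) sequentially" for m
      by (intro tendsto_intros pair_tendsto assms)
    show "\<forall>\<^sub>F (m, n) in sequentially \<times>\<^sub>F sequentially.
       norm ((1/2::real) ^ ((a m)\<^sup>2) * \<bar>read_pair u a m (z n)\<bar>) \<le> (1/2::real) ^ ((a m)\<^sup>2) * (real (a m) + 1) * B"
      using Pn_term_bound[OF assms(1)] assms(2) by (intro always_eventually) auto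
    show "summable (\<lambda>m. (1/2::real) ^ ((a m)\<^sup>2) * (real (a m) + 1) * B)"
      by (intro summable_mult2 summable_M[OF assms(1)] assms)
  qed auto
  then show ?thesis by (simp add: Pn_def)
qed

lemma ip_finite:
  assumes "finite A" "{k. v k \<noteq> 0} \<subseteq> A"
  shows "ip w v = (\<Sum>k\<in>A. w k * real_of_rat (v k))"
  unfolding ip_def using assms by (intro sum.mono_neutral_left) auto

lemma rat_approx:
  fixes r :: real assumes "0 < d" shows "\<exists>q. \<bar>real_of_rat q - r\<bar> < d"
proof -
  obtain s where "s \<in> \<rat>" "r - d < s" "s < r + d"
    using Rats_dense_in_real[of "r - d" "r + d"] assms by auto
  then obtain q where "s = real_of_rat q" by (auto elim: Rats_cases)
  then show ?thesis using \<open>r - d < s\<close> \<open>s < r + d\<close> by (intro exI[of _ q]) auto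
qed

lemma small_prod:
  fixes \<alpha> \<beta> e :: real
  assumes "\<bar>\<alpha>\<bar> \<le> 1" "\<bar>\<beta>\<bar> \<le> e" shows "\<bar>\<alpha> * \<beta>\<bar> \<le> e"
proof -
  have "\<bar>\<alpha>\<bar> * \<bar>\<beta>\<bar> \<le> 1 * \<bar>\<beta>\<bar>" by (intro mult_right_mono assms) auto
  then show ?thesis using assms by (simp add: abs_mult)
qed

lemma sep:
  fixes x y :: "nat \<Rightarrow> real"
  assumes xj: "x j \<noteq> 0" and xb: "\<forall>k. \<bar>x k\<bar> \<le> 1" and yb: "\<forall>k. \<bar>y k\<bar> \<le> 1"
    and nl: "\<not> (\<exists>l\<ge>0. \<forall>k. y k = l * x k)"
  shows "\<exists>v\<in>c00Q. ip x v > 0 \<and> ip y v < -1"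
proof (cases "\<exists>i. y i \<noteq> (y j / x j) * x i")
  case True
  then obtain i where i: "y i \<noteq> (y j / x j) * x i" by blast
  then have ij: "i \<noteq> j" using xj by auto
  define D where "D = x i * y j - x j * y i"
  have "D = x j * ((y j / x j) * x i - y i)" using xj by (simp add: D_def field_simps)
  then have D: "D \<noteq> 0" using xj i by auto
  define p where "p = (y j + 2 * x j) / D"
  define q where "q = (- 2 * x i - y i) / D"
  have num1: "x i * (y j + 2 * x j) + x j * (- 2 * x i - y i) = D" by (simp add: D_def algebra_simps)
  have "x i * p + x j * q = (x i * (y j + 2 * x j) + x j * (- 2 * x i - y i)) / D"
    by (simp add: p_def q_def add_divide_distrib[symmetric] diff_divide_distrib[symmetric])
  also have "\<dots> = 1" using D by (simp only: num1) simp
  finally have e1: "x i * p + x j * q = 1" .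
  have num: "y i * (y j + 2 * x j) + y j * (- 2 * x i - y i) = -2 * D" by (simp add: D_def algebra_simps)
  have "y i * p + y j * q = (y i * (y j + 2 * x j) + y j * (- 2 * x i - y i)) / D"
    by (simp add: p_def q_def add_divide_distrib[symmetric] diff_divide_distrib[symmetric])
  also have "\<dots> = -2" using D by (simp only: num) simp
  finally have e2: "y i * p + y j * q = -2" .
  obtain p' where p': "\<bar>real_of_rat p' - p\<bar> < 1/4" using rat_approx[of "1/4" p] by auto
  obtain q' where q': "\<bar>real_of_rat q' - q\<bar> < 1/4" using rat_approx[of "1/4" q] by auto
  define v where "v = (\<lambda>k. if k = i then p' else if k = j then q' else 0)"
  have supp: "{k. v k \<noteq> 0} \<subseteq> {i, j}" by (auto simp: v_def)
  then have vc: "v \<in> c00Q" unfolding c00Q_def by (auto intro: finite_subset)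
  have ipw: "ip w v = w i * real_of_rat p' + w j * real_of_rat q'" for w
    using ip_finite[OF _ supp, of w] ij by (simp add: v_def)
  have a1: "\<bar>x i * (real_of_rat p' - p)\<bar> \<le> 1/4" "\<bar>x j * (real_of_rat q' - q)\<bar> \<le> 1/4"
    "\<bar>y i * (real_of_rat p' - p)\<bar> \<le> 1/4" "\<bar>y j * (real_of_rat q' - q)\<bar> \<le> 1/4"
    using small_prod p' q' xb yb by (meson less_imp_le)+
  have "ip x v = 1 + x i * (real_of_rat p' - p) + x j * (real_of_rat q' - q)"
    using e1 by (simp add: ipw algebra_simps)
  moreover have "ip y v = -2 + y i * (real_of_rat p' - p) + y j * (real_of_rat q' - q)"
    using e2 by (simp add: ipw algebra_simps)
  ultimately have "ip x v > 0" "ip y v < -1" using a1 by (auto simp: abs_le_iff)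
  then show ?thesis using vc by blast
next
  case False
  define l where "l = y j / x j"
  have yl: "\<forall>k. y k = l * x k" unfolding l_def using False by blast
  then have l: "l < 0" using nl not_le by blast
  define q where "q = (1 - 1 / l) / x j"
  have e1: "x j * q = 1 - 1 / l" using xj by (simp add: q_def)
  obtain q' where q': "\<bar>real_of_rat q' - q\<bar> < 1/4" using rat_approx[of "1/4" q] by auto
  define v where "v = (\<lambda>k. if k = j then q' else 0)"
  have supp: "{k. v k \<noteq> 0} \<subseteq> {j}" by (auto simp: v_def)
  then have vc: "v \<in> c00Q" unfolding c00Q_def by (auto intro: finite_subset)
  have ipw: "ip w v = w j * real_of_rat q'" for w
    using ip_finite[OF _ supp, of w] by (simp add: v_def)
  define e where "e = x j * (real_of_rat q' - q)"
  have ae: "\<bar>e\<bar> \<le> 1/4" unfolding e_def by (rule small_prod) (use q' xb in auto)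
  have ipx: "ip x v = 1 - 1 / l + e" using e1 by (simp add: ipw e_def algebra_simps)
  have "1 / l < 0" using l by simp
  then have g1: "ip x v > 0" using ae ipx by (simp only: abs_le_iff) linarith
  have "ip y v = l * ip x v" using yl by (simp add: ipw)
  also have "\<dots> = l - 1 + l * e" using l by (simp add: ipx algebra_simps)
  finally have "ip y v = l - 1 + l * e" .
  have "l * e \<le> - l / 4"
  proof -
    have "\<bar>l\<bar> * \<bar>e\<bar> \<le> \<bar>l\<bar> * (1/4)" by (rule mult_left_mono) (use ae in auto)
    then have "\<bar>l * e\<bar> \<le> \<bar>l\<bar> * (1/4)" by (simp add: abs_mult)
    then show ?thesis using l by (auto simp: abs_le_iff)
  qed
  then have "ip y v < -1" using \<open>ip y v = l - 1 + l * e\<close> l by linarith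
  then show ?thesis using vc g1 by blast
qed

lemma abs_add_eq_imp: fixes p q :: real assumes "\<bar>p\<bar> + \<bar>q\<bar> = \<bar>p + q\<bar>" shows "0 \<le> p * q"
  using assms by (smt (verit) mult_nonneg_nonneg mult_nonpos_nonpos)

lemma norm_one_bnd:
  assumes P: "read_params u a" and "w \<in> c0" and "read_norm u a w = 1"
  shows "\<forall>k. \<bar>w k\<bar> \<le> 1"
proof -
  obtain S where S: "\<forall>k. \<bar>w k\<bar> \<le> S" using c0_bnd[OF assms(2)] by blast
  have "sup_norm w \<le> 1" using Pn_nonneg[OF P S] assms(3) by (simp add: read_norm_Pn)
  then show ?thesis using sup_ge[OF S] by (meson order_trans)
qed

lemma ident:
  assumes P: "read_params u a" and x: "x \<in> c0" "read_norm u a x = 1"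
    and z: "\<forall>n. z n \<in> c0" "\<forall>n. read_norm u a (z n) = 1"
    and lim: "(\<lambda>n. read_norm u a (\<lambda>k. x k + z n k)) \<longlonglongrightarrow> 2"
    and conv: "\<forall>k. (\<lambda>n. z n k) \<longlonglongrightarrow> y k"
  shows "y = x"
proof -
  have xb: "\<forall>k. \<bar>x k\<bar> \<le> 1" using norm_one_bnd[OF P x] .
  have zb: "\<forall>n k. \<bar>z n k\<bar> \<le> 1" using norm_one_bnd[OF P] z by blast
  have zb': "\<forall>k. \<bar>z n k\<bar> \<le> 1" for n using zb by blast
  have yb: "\<forall>k. \<bar>y k\<bar> \<le> 1"
  proof
    fix k
    have "(\<lambda>n. \<bar>z n k\<bar>) \<longlonglongrightarrow> \<bar>y k\<bar>" using conv by (intro tendsto_intros) auto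
    then show "\<bar>y k\<bar> \<le> 1" by (rule LIMSEQ_le_const2) (use zb in auto)
  qed
  have xzb: "\<forall>k. \<bar>x k + z n k\<bar> \<le> 2" for n using xb zb'[of n] by (metis abs_triangle_ineq add_mono one_add_one order_trans)
  define c where "c m = (1/2::real) ^ ((a m)\<^sup>2)" for m
  have c_pos: "0 < c m" for m by (simp add: c_def)
  define Gp where "Gp n = Pn u a x + Pn u a (z n) - Pn u a (\<lambda>k. x k + z n k)" for n
  have Gp_nonneg: "0 \<le> Gp n" for n using Pn_add[OF P xb zb'[of n]] by (simp add: Gp_def)
  have sx: "sup_norm x + Pn u a x = 1" using x by (simp add: read_norm_Pn)
  have sz: "sup_norm (z n) + Pn u a (z n) = 1" for n using z by (simp add: read_norm_Pn)
  have Gp_le: "Gp n \<le> 2 - read_norm u a (\<lambda>k. x k + z n k)" for n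
    using sup_add[OF xb zb'[of n]] sx sz[of n] by (simp add: read_norm_Pn Gp_def)
  have l0: "(\<lambda>n. 2 - read_norm u a (\<lambda>k. x k + z n k)) \<longlonglongrightarrow> 0"
    using tendsto_diff[OF tendsto_const[of 2] lim] by simp
  have ev1: "eventually (\<lambda>n. 0 \<le> Gp n) sequentially" by (intro always_eventually allI Gp_nonneg)
  have ev2: "eventually (\<lambda>n. Gp n \<le> 2 - read_norm u a (\<lambda>k. x k + z n k)) sequentially"
    by (intro always_eventually allI Gp_le)
  have Gp_lim: "Gp \<longlonglongrightarrow> 0" by (rule tendsto_sandwich[OF ev1 ev2 tendsto_const l0])
  have sgn: "0 \<le> read_pair u a m x * read_pair u a m y" for m
  proof -
    define T where "T n = c m * (\<bar>read_pair u a m x\<bar> + \<bar>read_pair u a m (z n)\<bar> - \<bar>read_pair u a m x + read_pair u a m (z n)\<bar>)" for n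
    have T_le: "T n \<le> Gp n" for n
    proof -
      define f where "f i = c i * (\<bar>read_pair u a i x\<bar> + \<bar>read_pair u a i (z n)\<bar> - \<bar>read_pair u a i x + read_pair u a i (z n)\<bar>)" for i
      have s1: "summable (\<lambda>i. c i * \<bar>read_pair u a i x\<bar>)" using Pn_summable[OF P xb] by (simp add: c_def)
      have s2: "summable (\<lambda>i. c i * \<bar>read_pair u a i (z n)\<bar>)" using Pn_summable[OF P zb'[of n]] by (simp add: c_def)
      have s3: "summable (\<lambda>i. c i * \<bar>read_pair u a i x + read_pair u a i (z n)\<bar>)"
        using Pn_summable[OF P xzb[of n]] by (simp add: c_def pair_add)
      have "Gp n = (\<Sum>i. c i * \<bar>read_pair u a i x\<bar> + c i * \<bar>read_pair u a i (z n)\<bar> - c i * \<bar>read_pair u a i x + read_pair u a i (z n)\<bar>)"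
        unfolding Gp_def Pn_def c_def[symmetric] pair_add
        by (subst suminf_add[OF s1 s2]) (subst suminf_diff[OF summable_add[OF s1 s2] s3], rule refl)
      also have "\<dots> = suminf f" by (rule arg_cong[where f=suminf]) (simp add: fun_eq_iff f_def algebra_simps)
      finally have G: "Gp n = suminf f" .
      have ff: "f = (\<lambda>i. c i * \<bar>read_pair u a i x\<bar> + c i * \<bar>read_pair u a i (z n)\<bar> - c i * \<bar>read_pair u a i x + read_pair u a i (z n)\<bar>)"
        by (simp add: fun_eq_iff f_def algebra_simps)
      have sf: "summable f"
        unfolding ff by (rule summable_diff[OF summable_add[OF s1 s2] s3])
      have fnn: "0 \<le> f i" for i unfolding f_def using c_pos[of i] abs_triangle_ineq by (intro mult_nonneg_nonneg) auto
      have "sum f {m} \<le> suminf f" by (rule sum_le_suminf[OF sf]) (use fnn in auto)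
      then show ?thesis using G by (simp add: T_def f_def)
    qed
    have T_lim: "T \<longlonglongrightarrow> c m * (\<bar>read_pair u a m x\<bar> + \<bar>read_pair u a m y\<bar> - \<bar>read_pair u a m x + read_pair u a m y\<bar>)"
      unfolding T_def by (intro tendsto_intros pair_tendsto) (use conv in auto)
    have "c m * (\<bar>read_pair u a m x\<bar> + \<bar>read_pair u a m y\<bar> - \<bar>read_pair u a m x + read_pair u a m y\<bar>) \<le> 0"
      using T_lim Gp_lim T_le by (intro LIMSEQ_le) auto
    moreover have "0 \<le> \<bar>read_pair u a m x\<bar> + \<bar>read_pair u a m y\<bar> - \<bar>read_pair u a m x + read_pair u a m y\<bar>"
      using abs_triangle_ineq by auto
    ultimately have "\<bar>read_pair u a m x\<bar> + \<bar>read_pair u a m y\<bar> = \<bar>read_pair u a m x + read_pair u a m y\<bar>"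
      using c_pos[of m] by (smt (verit) mult_pos_pos)
    then show ?thesis by (rule abs_add_eq_imp)
  qed

  obtain j where xj: "x j \<noteq> 0"
  proof (rule ccontr)
    assume "\<not> thesis"
    then have x0: "\<forall>k. x k = 0" using that by blast
    have "sup_norm x = 0" unfolding sup_norm_def using x0 by simp
    moreover have "Pn u a x = 0" unfolding Pn_def read_pair_def using x0 by simp
    ultimately show False using sx by simp
  qed
  have "\<exists>l\<ge>0. \<forall>k. y k = l * x k"
  proof (rule ccontr)
    assume nl: "\<not> (\<exists>l\<ge>0. \<forall>k. y k = l * x k)"
    obtain v where v: "v \<in> c00Q" "ip x v > 0" "ip y v < -1" using sep[OF xj xb yb nl] by blast
    have inf: "infinite {m. u m = v}" using P v(1) by (simp add: read_params_def)
    obtain N where N: "\<forall>k\<ge>N. \<bar>x k\<bar> < ip x v"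
      using x(1) v(2) unfolding c0_def LIMSEQ_iff by auto
    obtain m where m: "m \<ge> N" "u m = v" using inf by (auto simp: infinite_nat_iff_unbounded_le)
    have "m \<le> a m" using P by (simp add: read_params_def seq_suble)
    then have "\<bar>x (a m)\<bar> < ip x v" using N m(1) by auto
    then have r1: "read_pair u a m x > 0" using pair_ip[OF P, of m x] m(2) by auto
    have "\<bar>y (a m)\<bar> \<le> 1" using yb by blast
    then have r2: "read_pair u a m y < 0" using pair_ip[OF P, of m y] m(2) v(3) by auto
    have "read_pair u a m x * read_pair u a m y < 0" using r1 r2 by (simp add: mult_pos_neg)
    then show False using sgn[of m] by simp
  qed
  then obtain l where l0: "l \<ge> 0" and yl: "\<forall>k. y k = l * x k" by blast
  have yl': "y = (\<lambda>k. l * x k)" using yl by auto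
  define PX where "PX = Pn u a x"
  define M where "M = sup_norm x"
  have MPX: "M + PX = 1" using sx by (simp add: M_def PX_def)
  have Mpos: "M > 0" using sup_ge[OF xb, of j] xj by (simp add: M_def)
  have Py: "Pn u a y = l * PX" unfolding yl' PX_def using Pn_scale[OF P xb, of l] l0 by simp
  have Pxy: "Pn u a (\<lambda>k. x k + y k) = (1 + l) * PX"
  proof -
    have "(\<lambda>k. x k + y k) = (\<lambda>k. (1 + l) * x k)" using yl by (auto simp: algebra_simps)
    then show ?thesis unfolding PX_def using Pn_scale[OF P xb, of "1 + l"] l0 by simp
  qed
  have "(\<lambda>n. Pn u a (z n)) \<longlonglongrightarrow> Pn u a y" by (rule Pn_tendsto[OF P zb]) (use conv in auto)
  then have Pz: "(\<lambda>n. Pn u a (z n)) \<longlonglongrightarrow> l * PX" using Py by simp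
  have Pxz: "(\<lambda>n. Pn u a (\<lambda>k. x k + z n k)) \<longlonglongrightarrow> (1 + l) * PX"
  proof -
    have "\<forall>k. (\<lambda>n. x k + z n k) \<longlonglongrightarrow> x k + y k" using conv by (auto intro: tendsto_intros)
    moreover have "\<forall>n k. \<bar>x k + z n k\<bar> \<le> 2" using xzb by blast
    ultimately have "(\<lambda>n. Pn u a (\<lambda>k. x k + z n k)) \<longlonglongrightarrow> Pn u a (\<lambda>k. x k + y k)"
      by (intro Pn_tendsto[OF P]) auto
    then show ?thesis using Pxy by simp
  qed
  define Sinf where "Sinf = 1 - l * PX"
  have Sz: "(\<lambda>n. sup_norm (z n)) \<longlonglongrightarrow> Sinf"
  proof -
    have "(\<lambda>n. 1 - Pn u a (z n)) \<longlonglongrightarrow> 1 - l * PX" by (intro tendsto_intros Pz)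
    moreover have "sup_norm (z n) = 1 - Pn u a (z n)" for n using sz[of n] by simp
    ultimately show ?thesis by (simp add: Sinf_def)
  qed
  have Sxz: "(\<lambda>n. sup_norm (\<lambda>k. x k + z n k)) \<longlonglongrightarrow> M + Sinf"
  proof -
    have "(\<lambda>n. read_norm u a (\<lambda>k. x k + z n k) - Pn u a (\<lambda>k. x k + z n k)) \<longlonglongrightarrow> 2 - (1 + l) * PX"
      by (intro tendsto_intros lim Pxz)
    moreover have "2 - (1 + l) * PX = M + Sinf" using MPX by (simp add: Sinf_def algebra_simps)
    ultimately show ?thesis by (simp add: read_norm_Pn)
  qed
  have lM: "l * M \<le> Sinf"
  proof (cases "l = 0")
    case True
    have "0 \<le> Sinf" using Sz by (rule LIMSEQ_le_const) (use sup_nonneg[OF zb'] in auto)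
    then show ?thesis using True by simp
  next
    case False
    then have lp: "l > 0" using l0 by simp
    have "\<forall>k. \<bar>x k\<bar> \<le> Sinf / l"
    proof
      fix k
      have "(\<lambda>n. \<bar>z n k\<bar>) \<longlonglongrightarrow> \<bar>y k\<bar>" using conv by (intro tendsto_intros) auto
      then have "\<bar>y k\<bar> \<le> Sinf" using Sz by (rule LIMSEQ_le) (use sup_ge[OF zb'] in auto)
      then have "l * \<bar>x k\<bar> \<le> Sinf" using yl l0 by (simp add: abs_mult)
      then show "\<bar>x k\<bar> \<le> Sinf / l" using lp by (simp add: field_simps)
    qed
    then have "M \<le> Sinf / l" unfolding M_def by (rule sup_le)
    then show ?thesis using lp by (simp add: field_simps)
  qed
  have l_le: "l \<le> 1"
  proof -
    have PXe: "PX = 1 - M" using MPX by simp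
    have "l * M \<le> 1 - l * (1 - M)" using lM unfolding Sinf_def PXe .
    then show ?thesis by (simp add: algebra_simps)
  qed
  have key: "M + Sinf \<le> max ((1 + l) * M) Sinf + eta" if eta: "eta > 0" for eta
  proof -
    obtain K where K: "\<forall>k\<ge>K. \<bar>x k\<bar> < eta"
      using x(1) eta unfolding c0_def LIMSEQ_iff by auto
    have "\<forall>k\<in>{..<K}. eventually (\<lambda>n. \<bar>x k + z n k\<bar> < (1 + l) * M + eta) sequentially"
    proof
      fix k
      have "(\<lambda>n. \<bar>x k + z n k\<bar>) \<longlonglongrightarrow> \<bar>x k + y k\<bar>" using conv by (intro tendsto_intros) auto
      moreover have "\<bar>x k + y k\<bar> < (1 + l) * M + eta"
      proof -
        have "x k + y k = (1 + l) * x k" using yl by (simp add: algebra_simps)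
        then have "\<bar>x k + y k\<bar> = (1 + l) * \<bar>x k\<bar>" using l0 by (simp add: abs_mult)
        also have "\<dots> \<le> (1 + l) * M" using sup_ge[OF xb, of k] l0 by (simp add: M_def mult_left_mono)
        finally show ?thesis using eta by simp
      qed
      ultimately show "eventually (\<lambda>n. \<bar>x k + z n k\<bar> < (1 + l) * M + eta) sequentially"
        by (rule order_tendstoD)
    qed
    then have "eventually (\<lambda>n. \<forall>k\<in>{..<K}. \<bar>x k + z n k\<bar> < (1 + l) * M + eta) sequentially"
      by (rule eventually_ball_finite[rotated]) simp
    then have ev: "eventually (\<lambda>n. sup_norm (\<lambda>k. x k + z n k) \<le> max ((1 + l) * M) (sup_norm (z n)) + eta) sequentially"
    proof eventually_elim
      case (elim n)
      show ?case
      proof (rule sup_le, rule allI)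
        fix k
        show "\<bar>x k + z n k\<bar> \<le> max ((1 + l) * M) (sup_norm (z n)) + eta"
        proof (cases "k < K")
          case True
          then have "\<bar>x k + z n k\<bar> < (1 + l) * M + eta" using elim by auto
          then show ?thesis using max.cobounded1[of "(1 + l) * M" "sup_norm (z n)"] by linarith
        next
          case False
          then have "\<bar>x k\<bar> < eta" using K by auto
          moreover have "\<bar>z n k\<bar> \<le> sup_norm (z n)" using sup_ge[OF zb'] by blast
          moreover have "\<bar>x k + z n k\<bar> \<le> \<bar>x k\<bar> + \<bar>z n k\<bar>" by (rule abs_triangle_ineq)
          ultimately show ?thesis using max.cobounded2[of "sup_norm (z n)" "(1 + l) * M"] by linarith
        qed
      qed
    qed
    have "(\<lambda>n. max ((1 + l) * M) (sup_norm (z n)) + eta) \<longlonglongrightarrow> max ((1 + l) * M) Sinf + eta"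
      by (intro tendsto_intros Sz)
    then show ?thesis using Sxz ev by (intro tendsto_le[OF trivial_limit_sequentially]) auto
  qed
  have "M + Sinf \<le> max ((1 + l) * M) Sinf"
    by (rule field_le_epsilon) (rule key)
  then have "M + Sinf \<le> (1 + l) * M" using Mpos by (auto simp: max_def split: if_splits)
  then have "1 \<le> (M + PX) * l" by (simp add: Sinf_def algebra_simps)
  then have "1 \<le> l" using MPX by simp
  then have "l = 1" using l_le by simp
  then show ?thesis using yl' by simp
qed
lemma bounded_subseq:
  fixes z :: "nat \<Rightarrow> nat \<Rightarrow> real"
  assumes "\<And>n k. \<bar>z n k\<bar> \<le> 1"
  shows "\<exists>r y. strict_mono r \<and> (\<forall>k. (\<lambda>n. z (r n) k) \<longlonglongrightarrow> y k)"
proof -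
  define S where "S = PiE (UNIV::nat set) (\<lambda>_. {-1..(1::real)})"
  have "compactin (product_topology (\<lambda>_. euclidean) UNIV) S"
    unfolding S_def by (subst compactin_PiE) auto
  then have "compact S" by (simp add: euclidean_product_topology)
  then have "seq_compact S" by (rule compact_imp_seq_compact)
  moreover have "\<forall>n. z n \<in> S" using assms by (auto simp: S_def abs_le_iff)
  ultimately obtain l r where "l \<in> S" "strict_mono r" "(z \<circ> r) \<longlonglongrightarrow> l"
    by (meson seq_compactE)
  moreover have "(\<lambda>n. z (r n) k) \<longlonglongrightarrow> l k" for k
  proof -
    have "limitin (product_topology (\<lambda>_. euclidean) UNIV) (z \<circ> r) l sequentially"
      using \<open>(z \<circ> r) \<longlonglongrightarrow> l\<close> by (simp add: euclidean_product_topology)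
    then show ?thesis by (simp add: limitin_componentwise)
  qed
  ultimately show ?thesis by blast
qed

lemma coordwise:
  assumes P: "read_params u a"
    and x: "x \<in> c0" "read_norm u a x = 1"
    and xs: "\<forall>n. xs n \<in> c0" "\<forall>n. read_norm u a (xs n) = 1"
    and lim: "(\<lambda>n. read_norm u a (\<lambda>k. x k + xs n k)) \<longlonglongrightarrow> 2"
  shows "(\<lambda>n. xs n k0) \<longlonglongrightarrow> x k0"
proof (rule ccontr)
  assume nc: "\<not> (\<lambda>n. xs n k0) \<longlonglongrightarrow> x k0"
  then obtain r where r: "r > 0" "\<forall>no. \<exists>n\<ge>no. r \<le> \<bar>xs n k0 - x k0\<bar>"
    unfolding LIMSEQ_iff by (auto simp: not_less real_norm_def)
  define S where "S = {n. r \<le> \<bar>xs n k0 - x k0\<bar>}"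
  have infS: "infinite S" unfolding S_def infinite_nat_iff_unbounded_le using r(2) by auto
  define \<sigma> where "\<sigma> = enumerate S"
  have sm: "strict_mono \<sigma>" unfolding \<sigma>_def using infS by (rule strict_mono_enumerate)
  have inS: "\<sigma> n \<in> S" for n unfolding \<sigma>_def using infS by (rule enumerate_in_set)
  have bnd: "\<And>n k. \<bar>xs (\<sigma> n) k\<bar> \<le> 1" using norm_one_bnd[OF P] xs by blast
  obtain \<rho> y where rho: "strict_mono \<rho>" "\<forall>k. (\<lambda>n. xs (\<sigma> (\<rho> n)) k) \<longlonglongrightarrow> y k"
    using bounded_subseq[of "\<lambda>n. xs (\<sigma> n)", OF bnd] by blast
  have sm2: "strict_mono (\<sigma> \<circ> \<rho>)" using sm rho(1) by (rule strict_mono_o)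
  have lim2: "(\<lambda>n. read_norm u a (\<lambda>k. x k + xs (\<sigma> (\<rho> n)) k)) \<longlonglongrightarrow> 2"
    using LIMSEQ_subseq_LIMSEQ[OF lim sm2] by (simp add: o_def)
  have "y = x"
    by (rule ident[OF P x _ _ lim2 rho(2)]) (use xs in auto)
  then have "(\<lambda>n. xs (\<sigma> (\<rho> n)) k0) \<longlonglongrightarrow> x k0" using rho(2) by auto
  then obtain no where "\<forall>n\<ge>no. \<bar>xs (\<sigma> (\<rho> n)) k0 - x k0\<bar> < r"
    using r(1) unfolding LIMSEQ_iff by (auto simp: real_norm_def)
  moreover have "r \<le> \<bar>xs (\<sigma> (\<rho> no)) k0 - x k0\<bar>" using inS[of "\<rho> no"] by (simp add: S_def)
  ultimately show False by auto
qed

definition trunc :: "nat \<Rightarrow> (nat \<Rightarrow> real) \<Rightarrow> nat \<Rightarrow> real" where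
  "trunc N w = (\<lambda>i. if i < N then w i else 0)"

definition ev :: "nat \<Rightarrow> nat \<Rightarrow> real" where
  "ev k = (\<lambda>i. if i = k then 1 else 0)"

lemma c0_evz: assumes "\<forall>i\<ge>N. w i = 0" shows "w \<in> c0"
  unfolding c0_def LIMSEQ_iff mem_Collect_eq
proof (intro allI impI)
  fix r :: real assume "r > 0"
  then show "\<exists>no. \<forall>n\<ge>no. norm (w n - 0) < r" using assms by (intro exI[of _ N]) auto
qed

lemma trunc_c0: "trunc N w \<in> c0" by (rule c0_evz[of N]) (simp add: trunc_def)
lemma ev_c0: "ev k \<in> c0" by (rule c0_evz[of "Suc k"]) (simp add: ev_def)

lemma dual_add: "f \<in> read_dual u a \<Longrightarrow> y \<in> c0 \<Longrightarrow> z \<in> c0 \<Longrightarrow> f (\<lambda>k. y k + z k) = f y + f z"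
  by (simp add: read_dual_def)
lemma dual_scale: "f \<in> read_dual u a \<Longrightarrow> y \<in> c0 \<Longrightarrow> f (\<lambda>k. c * y k) = c * f y"
  by (simp add: read_dual_def)

lemma dual_bound:
  assumes "f \<in> read_dual u a" "read_params u a"
  obtains C where "C > 0" "\<And>y S. y \<in> c0 \<Longrightarrow> \<forall>k. \<bar>y k\<bar> \<le> S \<Longrightarrow> \<bar>f y\<bar> \<le> C * S"
proof -
  obtain C where C: "\<forall>y\<in>c0. \<bar>f y\<bar> \<le> C * read_norm u a y" using assms(1) by (auto simp: read_dual_def)
  define C' where "C' = 5 * max C 1"
  have "C' > 0" by (simp add: C'_def)
  moreover have "\<bar>f y\<bar> \<le> C' * S" if y: "y \<in> c0" "\<forall>k. \<bar>y k\<bar> \<le> S" for y S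
  proof -
    have rn0: "0 \<le> read_norm u a y"
      using sup_nonneg[OF y(2)] Pn_nonneg[OF assms(2) y(2)] by (simp add: read_norm_Pn)
    have "\<bar>f y\<bar> \<le> C * read_norm u a y" using C y by blast
    also have "\<dots> \<le> max C 1 * read_norm u a y" by (intro mult_right_mono rn0) simp
    also have "\<dots> \<le> max C 1 * (5 * S)" by (intro mult_left_mono read_norm_le[OF assms(2) y(2)]) simp
    finally show ?thesis by (simp add: C'_def)
  qed
  ultimately show ?thesis using that by blast
qed

lemma dual_zero: assumes "f \<in> read_dual u a" shows "f (\<lambda>k. 0) = 0"
  using dual_scale[OF assms c0_evz[of 0 "\<lambda>k. 0"], of 0] by simp

lemma f_trunc:
  assumes f: "f \<in> read_dual u a"
  shows "f (trunc N w) = (\<Sum>k<N. f (ev k) * w k)"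
proof (induction N)
  case 0
  have "trunc 0 w = (\<lambda>k. 0)" by (simp add: trunc_def)
  then show ?case using dual_zero[OF f] by simp
next
  case (Suc N)
  have "trunc (Suc N) w = (\<lambda>i. trunc N w i + w N * ev N i)"
    by (auto simp: trunc_def ev_def fun_eq_iff less_Suc_eq)
  then have "f (trunc (Suc N) w) = f (trunc N w) + f (\<lambda>i. w N * ev N i)"
    using dual_add[OF f trunc_c0 c0_evz[of "Suc N"]] by (simp add: ev_def)
  also have "f (\<lambda>i. w N * ev N i) = w N * f (ev N)" using dual_scale[OF f ev_c0] .
  finally show ?case using Suc by simp
qed

lemma f_rep:
  assumes f: "f \<in> read_dual u a" and P: "read_params u a" and w: "w \<in> c0"
  shows "(\<lambda>k. f (ev k) * w k) sums f w"
proof -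
  obtain C where C: "C > 0" "\<And>y S. y \<in> c0 \<Longrightarrow> \<forall>k. \<bar>y k\<bar> \<le> S \<Longrightarrow> \<bar>f y\<bar> \<le> C * S"
    using dual_bound[OF f P] by blast
  show ?thesis unfolding sums_def LIMSEQ_iff
  proof (intro allI impI)
    fix r :: real assume r: "r > 0"
    have wl: "\<forall>e>0. \<exists>no. \<forall>n\<ge>no. \<bar>w n\<bar> < e" using w unfolding c0_def LIMSEQ_iff by simp
    have "r / (2 * C) > 0" using r C(1) by simp
    then obtain no where no: "\<forall>i\<ge>no. \<bar>w i\<bar> < r / (2 * C)" using wl by blast
    have "\<bar>(\<Sum>k<N. f (ev k) * w k) - f w\<bar> < r" if N: "N \<ge> no" for N
    proof -
      define rest where "rest = (\<lambda>i. w i - trunc N w i)"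
      have rc: "rest \<in> c0" unfolding rest_def using w trunc_c0[of N w] unfolding c0_def
        by (auto intro: tendsto_eq_intros)
      have "(\<lambda>i. trunc N w i + rest i) = w" by (simp add: rest_def)
      then have "f w = f (trunc N w) + f rest" using dual_add[OF f trunc_c0[of N w] rc] by simp
      moreover have "\<bar>f rest\<bar> \<le> C * (r / (2 * C))"
        by (rule C(2)[OF rc]) (use no N in \<open>auto simp: rest_def trunc_def less_imp_le\<close>)
      moreover have "C * (r / (2 * C)) < r" using C(1) r by simp
      ultimately show ?thesis using f_trunc[OF f] by simp
    qed
    then show "\<exists>no. \<forall>n\<ge>no. norm ((\<Sum>k<n. f (ev k) * w k) - f w) < r" by auto
  qed
qed

lemma b_summable:
  assumes f: "f \<in> read_dual u a" and P: "read_params u a"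
  shows "summable (\<lambda>k. \<bar>f (ev k)\<bar>)"
proof -
  obtain C where C: "C > 0" "\<And>y S. y \<in> c0 \<Longrightarrow> \<forall>k. \<bar>y k\<bar> \<le> S \<Longrightarrow> \<bar>f y\<bar> \<le> C * S"
    using dual_bound[OF f P] by blast
  show ?thesis
  proof (rule summableI_nonneg_bounded)
    fix n
    have "(\<Sum>i<n. \<bar>f (ev i)\<bar>) = (\<Sum>i<n. f (ev i) * sgn (f (ev i)))"
      by (intro sum.cong) (auto simp: sgn_if)
    also have "\<dots> = f (trunc n (\<lambda>i. sgn (f (ev i))))" using f_trunc[OF f] by simp
    also have "\<dots> \<le> C * 1"
    proof -
      have h: "\<forall>k. \<bar>trunc n (\<lambda>i. sgn (f (ev i))) k\<bar> \<le> 1" by (simp add: trunc_def abs_sgn_eq)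
      have "\<bar>f (trunc n (\<lambda>i. sgn (f (ev i))))\<bar> \<le> C * 1" by (rule C(2)[OF trunc_c0 h])
      then show ?thesis by (simp add: abs_le_iff)
    qed
    finally show "(\<Sum>i<n. \<bar>f (ev i)\<bar>) \<le> C" by simp
  qed auto
qed

lemma dual_tendsto:
  assumes f: "f \<in> read_dual u a" and P: "read_params u a"
    and d: "\<forall>n. d n \<in> c0" "\<forall>n k. \<bar>d n k\<bar> \<le> B" "\<forall>k. (\<lambda>n. d n k) \<longlonglongrightarrow> 0"
  shows "(\<lambda>n. f (d n)) \<longlonglongrightarrow> 0"
proof -
  have eq: "f (d n) = (\<Sum>k. f (ev k) * d n k)" for n
    using f_rep[OF f P] d(1) by (simp add: sums_iff)
  have "((\<lambda>n. \<Sum>k. f (ev k) * d n k) \<longlongrightarrow> (\<Sum>k. (0::real))) sequentially"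
  proof (rule tannerys_theorem[THEN conjunct2, THEN conjunct2])
    show "((\<lambda>n. f (ev k) * d n k) \<longlongrightarrow> 0) sequentially" for k
      using tendsto_mult[OF tendsto_const d(3)[rule_format, of k]] by simp
    show "\<forall>\<^sub>F (k, n) in sequentially \<times>\<^sub>F sequentially. norm (f (ev k) * d n k) \<le> \<bar>f (ev k)\<bar> * B"
      using d(2) by (intro always_eventually) (auto simp: abs_mult intro: mult_left_mono)
    show "summable (\<lambda>k. \<bar>f (ev k)\<bar> * B)" by (intro summable_mult2 b_summable[OF f P])
  qed auto
  then show ?thesis by (simp add: eq)
qed

theorem theorem2p9:
  fixes u :: "nat \<Rightarrow> nat \<Rightarrow> rat" and a :: "nat \<Rightarrow> nat"
    and x :: "nat \<Rightarrow> real" and xs :: "nat \<Rightarrow> nat \<Rightarrow> real"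
  assumes "read_params u a"
    and "x \<in> c0" and "read_norm u a x = 1"
    and "\<forall>n. xs n \<in> c0" and "\<forall>n. read_norm u a (xs n) = 1"
    and "(\<lambda>n. read_norm u a (\<lambda>k. x k + xs n k)) \<longlonglongrightarrow> 2"
  shows "read_weakly_conv u a xs x"
  unfolding read_weakly_conv_def
proof
  fix f assume f: "f \<in> read_dual u a"
  define d where "d n = (\<lambda>k. xs n k - x k)" for n
  have dc: "\<forall>n. d n \<in> c0" using assms(2,4) unfolding d_def c0_def by (auto intro: tendsto_eq_intros)
  have xb: "\<forall>k. \<bar>x k\<bar> \<le> 1" using norm_one_bnd[OF assms(1-3)] .
  have xsb: "\<forall>n k. \<bar>xs n k\<bar> \<le> 1" using norm_one_bnd[OF assms(1)] assms(4,5) by blast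
  have db: "\<forall>n k. \<bar>d n k\<bar> \<le> 2" unfolding d_def using xb xsb
    by (metis abs_triangle_ineq4 add_mono one_add_one order_trans)
  have dl: "\<forall>k. (\<lambda>n. d n k) \<longlonglongrightarrow> 0" unfolding d_def
    by (intro allI LIM_zero coordwise[OF assms])
  have "(\<lambda>n. f (d n)) \<longlonglongrightarrow> 0" by (rule dual_tendsto[OF f assms(1) dc db dl])
  then have "(\<lambda>n. f x + f (d n)) \<longlonglongrightarrow> f x + 0" by (intro tendsto_intros)
  moreover have "f (xs n) = f x + f (d n)" for n
  proof -
    have "(\<lambda>k. x k + d n k) = xs n" by (simp add: d_def)
    then show ?thesis using dual_add[OF f assms(2) dc[rule_format, of n]] by simp
  qed
  ultimately show "(\<lambda>n. f (xs n)) \<longlonglongrightarrow> f x" by simp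
qed

end
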